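(* Let $\Theta$ be finite, let $\mu$ be an updating rule that systematically distorts updated beliefs with distortion functions $(D_{p'})_{p'}$, and let $p\in\Delta(\Theta)$ have full support. Let $\sigma,\tau$ be experiments and $s,t$ signals, and set $q:=\mu_B(\sigma,p)(\cdot\mid s)$ and $r:=\mu_B(\tau,q)(\cdot\mid t)$, where $q$ and $D_p(q)$ have full support and $\sum_{\theta}q(\theta)\tau_\theta(t)>0$. Then \[\mu(\tau,D_p(q))(\cdot\mid t)=D_{D_p(q)}\!\left(\frac{r\cdot\frac{D_p(q)}{q}}{\sum_{\theta'\in\Theta}r(\theta')\frac{D_p(q)(\theta')}{q(\theta')}}\right),\] where products and quotients of beliefs are taken componentwise in $\theta$.
   Context: An experiment is $\tau=(\tau_\theta)_{\theta\in\Theta}$ with $\tau_\theta\in\Delta(S)$ for a fixed finite signal set $S$. An updating rule is a map $\mu$ sending an experiment $\sigma$, a prior $p\in\Delta(\Theta)$ and a signal $s\in S$ to a posterior $\mu(\sigma,p)(\cdot\mid s)\in\Delta(\Theta)$. Bayesian updating: $\mu_B(\sigma,p)(\theta\mid s)=\frac{\sigma_\theta(s)p(\theta)}{\sum_{\theta'}\sigma_{\theta'}(s)p(\theta')}$ whenever the denominator is positive. The rule $\mu$ systematically distorts updated beliefs if for every full-support prior $p'$ there is a function $D_{p'}:\Delta(\Theta)\to\Delta(\Theta)$ such that $\mu(\sigma,p')(\cdot\mid s)=D_{p'}(\mu_B(\sigma,p')(\cdot\mid s))$ for all experiments $\sigma$ and signals $s$. *)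

theory Defs
  imports Complex_Main
begin

text \<open>Beliefs are functions 'th \<Rightarrow> real; an experiment is a function
  'th \<Rightarrow> 's \<Rightarrow> real (tau_theta(s)).\<close>

definition is_dist :: "('a::finite \<Rightarrow> real) \<Rightarrow> bool" where
  "is_dist p \<longleftrightarrow> (\<forall>x. p x \<ge> 0) \<and> (\<Sum>x\<in>UNIV. p x) = 1"

definition full_support :: "('th::finite \<Rightarrow> real) \<Rightarrow> bool" where
  "full_support p \<longleftrightarrow> is_dist p \<and> (\<forall>\<theta>. p \<theta> > 0)"

definition is_experiment :: "('th::finite \<Rightarrow> 's::finite \<Rightarrow> real) \<Rightarrow> bool" where
  "is_experiment \<sigma> \<longleftrightarrow> (\<forall>\<theta>. is_dist (\<sigma> \<theta>))"

definition sig_prob :: "('th::finite \<Rightarrow> 's \<Rightarrow> real) \<Rightarrow> ('th \<Rightarrow> real) \<Rightarrow> 's \<Rightarrow> real" where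
  "sig_prob \<sigma> p s = (\<Sum>\<theta>'\<in>UNIV. \<sigma> \<theta>' s * p \<theta>')"

text \<open>Bayesian posterior (meaningful whenever sig_prob \<sigma> p s > 0).\<close>
definition bayes :: "('th::finite \<Rightarrow> 's \<Rightarrow> real) \<Rightarrow> ('th \<Rightarrow> real) \<Rightarrow> 's \<Rightarrow> ('th \<Rightarrow> real)" where
  "bayes \<sigma> p s = (\<lambda>\<theta>. \<sigma> \<theta> s * p \<theta> / sig_prob \<sigma> p s)"

type_synonym ('th, 's) rule =
  "('th \<Rightarrow> 's \<Rightarrow> real) \<Rightarrow> ('th \<Rightarrow> real) \<Rightarrow> 's \<Rightarrow> ('th \<Rightarrow> real)"

text \<open>The updating rule mu systematically distorts updated beliefs with the
  family of distortion functions D (D p' is D_{p'} : \<Delta>(\<Theta>) \<rightarrow> \<Delta>(\<Theta>)).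
  The defining identity is required wherever the Bayesian posterior is defined.\<close>
definition distorts_with ::
  "('th::finite, 's::finite) rule \<Rightarrow> (('th \<Rightarrow> real) \<Rightarrow> ('th \<Rightarrow> real) \<Rightarrow> ('th \<Rightarrow> real)) \<Rightarrow> bool" where
  "distorts_with \<mu> D \<longleftrightarrow>
     (\<forall>p'. full_support p' \<longrightarrow>
        (\<forall>x. is_dist x \<longrightarrow> is_dist (D p' x)) \<and>
        (\<forall>\<sigma> s. is_experiment \<sigma> \<and> sig_prob \<sigma> p' s > 0 \<longrightarrow>
              \<mu> \<sigma> p' s = D p' (bayes \<sigma> p' s)))"

definition systematically_distorts :: "('th::finite, 's::finite) rule \<Rightarrow> bool" where
  "systematically_distorts \<mu> \<longleftrightarrow> (\<exists>D. distorts_with \<mu> D)"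

end

theory Submission
  imports Defs
begin

theorem lemma1:
  fixes \<mu> :: "('th::finite, 's::finite) rule"
    and D :: "('th \<Rightarrow> real) \<Rightarrow> ('th \<Rightarrow> real) \<Rightarrow> ('th \<Rightarrow> real)"
    and p :: "'th \<Rightarrow> real"
    and \<sigma> \<tau> :: "'th \<Rightarrow> 's \<Rightarrow> real"
    and s t :: 's
    and q r :: "'th \<Rightarrow> real"
  assumes "distorts_with \<mu> D"
    and "full_support p"
    and "is_experiment \<sigma>" and "is_experiment \<tau>"
    and "q = bayes \<sigma> p s"
    and "r = bayes \<tau> q t"
    and "full_support q" and "full_support (D p q)"
    and "(\<Sum>\<theta>\<in>UNIV. q \<theta> * \<tau> \<theta> t) > 0"
  shows "\<mu> \<tau> (D p q) t =
    D (D p q) (\<lambda>\<theta>. r \<theta> * (D p q \<theta> / q \<theta>) /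
                     (\<Sum>\<theta>'\<in>UNIV. r \<theta>' * (D p q \<theta>' / q \<theta>')))"
proof -
  define d where "d = D p q"
  have dpos: "\<And>x. d x > 0" using assms(8) unfolding d_def full_support_def by auto
  have qpos: "\<And>x. q x > 0" using assms(7) unfolding full_support_def by auto
  have tnn: "\<And>x. \<tau> x t \<ge> 0" using assms(4) unfolding is_experiment_def is_dist_def by auto
  define Z where "Z = sig_prob \<tau> q t"
  have Zpos: "Z > 0" using assms(9) unfolding Z_def sig_prob_def by (simp add: mult.commute)
  obtain x where x: "\<tau> x t \<noteq> 0"
  proof (rule ccontr)
    assume "\<not> thesis" with that have "\<forall>x. \<tau> x t = 0" by blast
    with assms(9) show False by simp
  qed
  have Wpos: "sig_prob \<tau> d t > 0"
  proof -
    have "\<tau> x t * d x > 0" using x tnn[of x] dpos[of x] by simp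
    also have "\<tau> x t * d x \<le> (\<Sum>y\<in>UNIV. \<tau> y t * d y)"
      by (rule member_le_sum) (auto intro: mult_nonneg_nonneg tnn less_imp_le dpos)
    finally show ?thesis unfolding sig_prob_def .
  qed
  have fs: "full_support d" using assms(8) d_def by simp
  have mu: "\<mu> \<tau> d t = D d (bayes \<tau> d t)"
    using assms(1) fs assms(4) Wpos unfolding distorts_with_def by blast
  have req: "\<And>y. r y * (d y / q y) = \<tau> y t * d y / Z"
    using qpos[of y] unfolding assms(6) bayes_def Z_def by (simp add: field_simps qpos[THEN less_imp_neq, symmetric])
  have sumeq: "(\<Sum>y\<in>UNIV. r y * (d y / q y)) = sig_prob \<tau> d t / Z"
    unfolding req sig_prob_def by (simp add: sum_divide_distrib)
  have "(\<lambda>y. r y * (d y / q y) / (\<Sum>y\<in>UNIV. r y * (d y / q y))) = bayes \<tau> d t"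
  proof
    fix y show "r y * (d y / q y) / (\<Sum>y\<in>UNIV. r y * (d y / q y)) = bayes \<tau> d t y"
      unfolding sumeq unfolding req bayes_def using Zpos Wpos by (simp add: field_simps)
  qed
  then show ?thesis using mu d_def by simp
qed

end
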